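(* The following three assignment rules are majoritarian: (1) the rule $\mathit{PO}$ returning all Pareto-optimal assignments; (2) least unpopularity, returning all assignments minimizing the unpopularity margin; (3) mixed popularity, returning all assignments that lie in the support of some mixed popular distribution.
   Context: Let $N=\{1,\dots,n\}$ be agents and $H$ a set of $n$ houses. A profile $P=(\succ_1,\dots,\succ_n)$ gives each agent a strict linear order on $H$. An assignment is a bijection $\mu:N\to H$; $M$ is the set of all assignments. Agent $x$ weakly prefers $\mu$ to $\lambda$ if $\mu(x)\succ_x\lambda(x)$ or $\mu(x)=\lambda(x)$, and strictly prefers it if $\mu(x)\succ_x\lambda(x)$. Let $N_{\mu,\lambda}$ be the set of agents weakly preferring $\mu$ to $\lambda$; $\mu\succsim\lambda$ if $|N_{\mu,\lambda}|\ge|N_{\lambda,\mu}|$. The majority graph of $P$ is $G_P=(M,\{(\mu,\lambda):\mu\succsim\lambda\})$. An assignment rule $F$ maps every profile $P$ to a nonempty set $F(P)\subseteq M$; it is majoritarian if $F(P)=F(P')$ for all profiles $P,P'$ with $G_P=G_{P'}$. $\mu$ Pareto-dominates $\lambda$ if every agent weakly prefers $\mu$ to $\lambda$ and some agent strictly prefers $\mu$ to $\lambda$; $\mu$ is Pareto-optimal if no assignment Pareto-dominates it. The unpopularity margin of $\mu$ is $\max_{\lambda\in M}(|N_{\lambda,\mu}|-|N_{\mu,\lambda}|)$; least unpopularity returns all assignments minimizing it. A probability distribution $\pi$ on $M$ is mixed popular if for every $\lambda\in M$, $\sum_{\mu\in M}\pi(\mu)\,(|N_{\mu,\lambda}|-|N_{\lambda,\mu}|)\ge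 0$; mixed popularity returns all assignments $\mu$ with $\pi(\mu)>0$ for some mixed popular $\pi$. *)

theory Defs
  imports "HOL-Analysis.Analysis"
begin

(* Agents are {1..n}; houses form a finite set H of type 'h with card H = n.
   A preference of an agent is a relation R :: ('h * 'h) set, (a,b) \<in> R meaning a \<succ> b. *)

definition agents :: "nat \<Rightarrow> nat set" where
  "agents n = {1..n}"

definition is_profile :: "nat \<Rightarrow> 'h set \<Rightarrow> (nat \<Rightarrow> ('h \<times> 'h) set) \<Rightarrow> bool" where
  "is_profile n H P \<longleftrightarrow>
     (\<forall>i\<in>agents n. strict_linear_order_on H (P i) \<and> P i \<subseteq> H \<times> H)"

definition assignments :: "nat \<Rightarrow> 'h set \<Rightarrow> (nat \<Rightarrow> 'h) set" where
  "assignments n H = {\<mu>. bij_betw \<mu> (agents n) H \<and> \<mu> \<in> extensional (agents n)}"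

definition weak_pref :: "(nat \<Rightarrow> ('h \<times> 'h) set) \<Rightarrow> nat \<Rightarrow> (nat \<Rightarrow> 'h) \<Rightarrow> (nat \<Rightarrow> 'h) \<Rightarrow> bool" where
  "weak_pref P x \<mu> l \<longleftrightarrow> (\<mu> x, l x) \<in> P x \<or> \<mu> x = l x"

definition strict_pref :: "(nat \<Rightarrow> ('h \<times> 'h) set) \<Rightarrow> nat \<Rightarrow> (nat \<Rightarrow> 'h) \<Rightarrow> (nat \<Rightarrow> 'h) \<Rightarrow> bool" where
  "strict_pref P x \<mu> l \<longleftrightarrow> (\<mu> x, l x) \<in> P x"

definition N_weak :: "nat \<Rightarrow> (nat \<Rightarrow> ('h \<times> 'h) set) \<Rightarrow> (nat \<Rightarrow> 'h) \<Rightarrow> (nat \<Rightarrow> 'h) \<Rightarrow> nat set" where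
  "N_weak n P \<mu> l = {x \<in> agents n. weak_pref P x \<mu> l}"

definition margin :: "nat \<Rightarrow> (nat \<Rightarrow> ('h \<times> 'h) set) \<Rightarrow> (nat \<Rightarrow> 'h) \<Rightarrow> (nat \<Rightarrow> 'h) \<Rightarrow> int" where
  "margin n P \<mu> l = int (card (N_weak n P \<mu> l)) - int (card (N_weak n P l \<mu>))"

definition maj_graph :: "nat \<Rightarrow> 'h set \<Rightarrow> (nat \<Rightarrow> ('h \<times> 'h) set) \<Rightarrow> ((nat \<Rightarrow> 'h) \<times> (nat \<Rightarrow> 'h)) set" where
  "maj_graph n H P = {(\<mu>, l). \<mu> \<in> assignments n H \<and> l \<in> assignments n H \<and>
       card (N_weak n P \<mu> l) \<ge> card (N_weak n P l \<mu>)}"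

definition majoritarian :: "nat \<Rightarrow> 'h set \<Rightarrow> ((nat \<Rightarrow> ('h \<times> 'h) set) \<Rightarrow> (nat \<Rightarrow> 'h) set) \<Rightarrow> bool" where
  "majoritarian n H F \<longleftrightarrow>
     (\<forall>P P'. is_profile n H P \<longrightarrow> is_profile n H P' \<longrightarrow>
        maj_graph n H P = maj_graph n H P' \<longrightarrow> F P = F P')"

definition pareto_dominates :: "nat \<Rightarrow> (nat \<Rightarrow> ('h \<times> 'h) set) \<Rightarrow> (nat \<Rightarrow> 'h) \<Rightarrow> (nat \<Rightarrow> 'h) \<Rightarrow> bool" where
  "pareto_dominates n P \<mu> l \<longleftrightarrow>
     (\<forall>x\<in>agents n. weak_pref P x \<mu> l) \<and> (\<exists>x\<in>agents n. strict_pref P x \<mu> l)"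

definition PO :: "nat \<Rightarrow> 'h set \<Rightarrow> (nat \<Rightarrow> ('h \<times> 'h) set) \<Rightarrow> (nat \<Rightarrow> 'h) set" where
  "PO n H P = {\<mu> \<in> assignments n H. \<not> (\<exists>l\<in>assignments n H. pareto_dominates n P l \<mu>)}"

definition unpopularity_margin :: "nat \<Rightarrow> 'h set \<Rightarrow> (nat \<Rightarrow> ('h \<times> 'h) set) \<Rightarrow> (nat \<Rightarrow> 'h) \<Rightarrow> int" where
  "unpopularity_margin n H P \<mu> = Max ((\<lambda>l. margin n P l \<mu>) ` assignments n H)"

definition least_unpopularity :: "nat \<Rightarrow> 'h set \<Rightarrow> (nat \<Rightarrow> ('h \<times> 'h) set) \<Rightarrow> (nat \<Rightarrow> 'h) set" where
  "least_unpopularity n H P = {\<mu> \<in> assignments n H.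
     \<forall>\<nu>\<in>assignments n H. unpopularity_margin n H P \<mu> \<le> unpopularity_margin n H P \<nu>}"

definition is_distribution :: "nat \<Rightarrow> 'h set \<Rightarrow> ((nat \<Rightarrow> 'h) \<Rightarrow> real) \<Rightarrow> bool" where
  "is_distribution n H \<pi> \<longleftrightarrow>
     (\<forall>\<mu>\<in>assignments n H. \<pi> \<mu> \<ge> 0) \<and> (\<Sum>\<mu>\<in>assignments n H. \<pi> \<mu>) = 1"

definition mixed_popular :: "nat \<Rightarrow> 'h set \<Rightarrow> (nat \<Rightarrow> ('h \<times> 'h) set) \<Rightarrow> ((nat \<Rightarrow> 'h) \<Rightarrow> real) \<Rightarrow> bool" where
  "mixed_popular n H P \<pi> \<longleftrightarrow> is_distribution n H \<pi> \<and>
     (\<forall>l\<in>assignments n H. (\<Sum>\<mu>\<in>assignments n H. \<pi> \<mu> * of_int (margin n P \<mu> l)) \<ge> 0)"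

definition mixed_popularity :: "nat \<Rightarrow> 'h set \<Rightarrow> (nat \<Rightarrow> ('h \<times> 'h) set) \<Rightarrow> (nat \<Rightarrow> 'h) set" where
  "mixed_popularity n H P = {\<mu> \<in> assignments n H. \<exists>\<pi>. mixed_popular n H P \<pi> \<and> \<pi> \<mu> > 0}"

end

theory Submission
  imports Defs
begin

definition wv :: "(nat \<Rightarrow> ('h\<times>'h) set) \<Rightarrow> nat \<Rightarrow> 'h \<Rightarrow> 'h \<Rightarrow> int" where
  "wv P x u v = (if (u,v) \<in> P x \<or> u = v then 1 else 0)"

definition FF :: "(nat \<Rightarrow> ('h\<times>'h) set) \<Rightarrow> nat \<Rightarrow> 'h \<Rightarrow> 'h \<Rightarrow> int" where
  "FF P x u v = wv P x u v - wv P x v u"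

lemma FF_refl[simp]: "FF P x u u = 0" by (simp add: FF_def)
lemma FF_anti: "FF P x u v = - FF P x v u" by (simp add: FF_def)

lemma card_int_sum: "finite A \<Longrightarrow> int (card {x\<in>A. Q x}) = (\<Sum>x\<in>A. if Q x then 1 else 0)"
  by (simp add: sum.If_cases Int_def conj_commute)

lemma margin_sum: "margin n P l m = (\<Sum>x\<in>agents n. FF P x (l x) (m x))"
proof -
  have f: "finite (agents n)" by (simp add: agents_def)
  show ?thesis
    unfolding margin_def N_weak_def FF_def sum_subtractf
    by (simp add: card_int_sum[OF f] wv_def weak_pref_def eq_commute)
qed

lemma FF_vals:
  assumes "is_profile n H P" "x \<in> agents n" "u \<in> H" "v \<in> H" "u \<noteq> v"
  shows "(FF P x u v = 1 \<and> (u,v) \<in> P x) \<or> (FF P x u v = -1 \<and> (v,u) \<in> P x \<and> (u,v) \<notin> P x)"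
proof -
  have s: "strict_linear_order_on H (P x)" using assms unfolding is_profile_def by auto
  hence t: "trans (P x)" and i: "irrefl (P x)" and to: "total_on H (P x)"
    unfolding strict_linear_order_on_def by auto
  have as: "\<not> ((u,v) \<in> P x \<and> (v,u) \<in> P x)" using t i unfolding trans_def irrefl_def by blast
  have "(u,v) \<in> P x \<or> (v,u) \<in> P x" using to assms unfolding total_on_def by auto
  thus ?thesis using as assms(5) by (auto simp: FF_def wv_def)
qed

lemma FF_tri:
  assumes "is_profile n H P" "x \<in> agents n" "a \<in> H" "b \<in> H" "c \<in> H" "a \<noteq> b" "b \<noteq> c" "a \<noteq> c"
  shows "FF P x b a + FF P x c b + FF P x a c = 1 \<or> FF P x b a + FF P x c b + FF P x a c = -1"
proof -
  have s: "strict_linear_order_on H (P x)" using assms unfolding is_profile_def by auto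
  hence t: "trans (P x)" and i: "irrefl (P x)"
    unfolding strict_linear_order_on_def by auto
  have 1: "(FF P x b a = 1 \<and> (b,a) \<in> P x) \<or> (FF P x b a = -1 \<and> (a,b) \<in> P x)"
    using FF_vals[OF assms(1,2,4,3)] assms by auto
  have 2: "(FF P x c b = 1 \<and> (c,b) \<in> P x) \<or> (FF P x c b = -1 \<and> (b,c) \<in> P x)"
    using FF_vals[OF assms(1,2,5,4)] assms by auto
  have 3: "(FF P x a c = 1 \<and> (a,c) \<in> P x) \<or> (FF P x a c = -1 \<and> (c,a) \<in> P x)"
    using FF_vals[OF assms(1,2,3,5)] assms by auto
  have nc1: "\<not> ((b,a) \<in> P x \<and> (c,b) \<in> P x \<and> (a,c) \<in> P x)"
    using t i unfolding trans_def irrefl_def by blast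
  have nc2: "\<not> ((a,b) \<in> P x \<and> (b,c) \<in> P x \<and> (c,a) \<in> P x)"
    using t i unfolding trans_def irrefl_def by blast
  show ?thesis using 1 2 3 nc1 nc2 by auto
qed

lemma swap_assign:
  assumes "m \<in> assignments n H" "i \<in> agents n" "j \<in> agents n"
  shows "m(i := m j, j := m i) \<in> assignments n H"
proof -
  have b: "bij_betw m (agents n) H" and e: "m \<in> extensional (agents n)"
    using assms(1) unfolding assignments_def by auto
  have "m(i := m j, j := m i) = m \<circ> Transposition.transpose i j"
    by (auto simp: Transposition.transpose_def)
  moreover have "bij_betw (Transposition.transpose i j) (agents n) (agents n)"
    using assms(2,3) by (simp add: bij_betw_transpose_iff)
  ultimately have "bij_betw (m(i := m j, j := m i)) (agents n) H"
    using b bij_betw_trans by metis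
  moreover have "m(i := m j, j := m i) \<in> extensional (agents n)"
    using e assms(2,3) by (auto simp: extensional_def)
  ultimately show ?thesis unfolding assignments_def by auto
qed

lemma some_assign:
  assumes "finite H" "card H = n" shows "\<exists>m. m \<in> assignments n H"
proof -
  have "finite (agents n)" "card (agents n) = card H" using assms by (auto simp: agents_def)
  then obtain g where g: "bij_betw g (agents n) H" using finite_same_card_bij assms(1) by blast
  have "bij_betw (restrict g (agents n)) (agents n) H"
    using g by (rule bij_betw_cong[THEN iffD1, rotated]) auto
  thus ?thesis unfolding assignments_def by (intro exI[of _ "restrict g (agents n)"]) auto
qed

lemma assign_list:
  assumes "finite H" "card H = n"
  shows "distinct xs \<Longrightarrow> distinct hs \<Longrightarrow> length xs = length hs \<Longrightarrow> set xs \<subseteq> agents n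
     \<Longrightarrow> set hs \<subseteq> H \<Longrightarrow> \<exists>m\<in>assignments n H. \<forall>t<length xs. m (xs!t) = hs!t"
proof (induction xs arbitrary: hs)
  case Nil
  then show ?case using some_assign[OF assms] by auto
next
  case (Cons x xs)
  then obtain h hs' where hs: "hs = h # hs'" by (cases hs) auto
  from Cons have "\<exists>m\<in>assignments n H. \<forall>t<length xs. m (xs!t) = hs'!t" using hs by auto
  then obtain m where m: "m \<in> assignments n H" and mt: "\<forall>t<length xs. m (xs!t) = hs'!t" by blast
  have b: "bij_betw m (agents n) H" using m unfolding assignments_def by auto
  have hH: "h \<in> H" using Cons.prems hs by auto
  define y where "y = inv_into (agents n) m h"
  have y: "y \<in> agents n" "m y = h" using b hH unfolding y_def
    by (auto simp: bij_betw_def inv_into_into f_inv_into_f)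
  have x: "x \<in> agents n" using Cons.prems by auto
  define m' where "m' = m(x := m y, y := m x)"
  have m': "m' \<in> assignments n H" unfolding m'_def using swap_assign[OF m x y(1)] .
  have "\<forall>t<length (x#xs). m' ((x#xs)!t) = hs!t"
  proof (intro allI impI)
    fix t assume t: "t < length (x#xs)"
    show "m' ((x#xs)!t) = hs!t"
    proof (cases t)
      case 0 then show ?thesis using y hs by (auto simp: m'_def)
    next
      case (Suc s)
      have s: "s < length xs" using t Suc by auto
      have "xs!s \<noteq> x" using Cons.prems(1) s by (auto simp: nth_mem)
      moreover have "xs!s \<noteq> y"
      proof
        assume "xs!s = y"
        then have "hs'!s = h" using mt s y by auto
        moreover have "s < length hs'" using Cons.prems(3) hs s by auto
        ultimately show False using Cons.prems(2) hs by (auto simp: nth_mem)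
      qed
      ultimately show ?thesis using mt s Suc hs by (auto simp: m'_def)
    qed
  qed
  then show ?case using m' by blast
qed

lemma margin_support:
  assumes "S \<subseteq> agents n" "\<forall>x\<in>agents n - S. l x = m x"
  shows "margin n P l m = (\<Sum>x\<in>S. FF P x (l x) (m x))"
  unfolding margin_sum
  by (rule sum.mono_neutral_right) (use assms in \<open>auto simp: agents_def\<close>)

lemma margin_anti: "margin n P l m = - margin n P m l"
  by (simp add: margin_def)

lemma graph_sign:
  assumes "maj_graph n H P = maj_graph n H P'" "l \<in> assignments n H" "m \<in> assignments n H"
  shows "0 \<le> margin n P l m \<longleftrightarrow> 0 \<le> margin n P' l m"
proof -
  have "\<And>Q. (l, m) \<in> maj_graph n H Q \<longleftrightarrow> 0 \<le> margin n Q l m"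
    using assms(2,3) by (auto simp: maj_graph_def margin_def)
  thus ?thesis using assms(1) by metis
qed

lemma agent_diff:
  assumes "finite H" "card H = n" "is_profile n H P" "is_profile n H P'"
    "maj_graph n H P = maj_graph n H P'" "i \<in> agents n" "j \<in> agents n" "a \<in> H" "b \<in> H"
  shows "FF P j a b - FF P i a b = FF P' j a b - FF P' i a b"
proof (cases "i = j \<or> a = b")
  case True then show ?thesis by auto
next
  case False
  have "\<exists>m\<in>assignments n H. \<forall>t<length [i,j]. m ([i,j]!t) = [a,b]!t"
    by (rule assign_list[OF assms(1,2)]) (use False assms in auto)
  then obtain m where m: "m \<in> assignments n H" and mt: "\<forall>t<length [i,j]. m ([i,j]!t) = [a,b]!t"
    by blast
  have mi: "m i = a" using mt[rule_format, of 0] by simp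
  have mj: "m j = b" using mt[rule_format, of 1] by simp
  define l where "l = m(i := m j, j := m i)"
  have l: "l \<in> assignments n H" unfolding l_def using swap_assign[OF m assms(6,7)] .
  have mar: "margin n Q l m = FF Q j a b - FF Q i a b" for Q
  proof -
    have "margin n Q l m = (\<Sum>x\<in>{i,j}. FF Q x (l x) (m x))"
      by (rule margin_support) (use assms False in \<open>auto simp: l_def\<close>)
    also have "\<dots> = FF Q i b a + FF Q j a b" using False mi mj by (simp add: l_def)
    finally show ?thesis using FF_anti[of Q i b a] by simp
  qed
  have v: "FF Q x u v = 1 \<or> FF Q x u v = -1"
    if "is_profile n H Q" "x \<in> agents n" "u \<in> H" "v \<in> H" "u \<noteq> v" for Q x u v
    using FF_vals[OF that] by auto
  have s1: "0 \<le> margin n P l m \<longleftrightarrow> 0 \<le> margin n P' l m" using graph_sign[OF assms(5) l m] .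
  have s2: "0 \<le> margin n P m l \<longleftrightarrow> 0 \<le> margin n P' m l" using graph_sign[OF assms(5) m l] .
  define X where "X = margin n P l m"
  define Y where "Y = margin n P' l m"
  have X: "X = FF P j a b - FF P i a b" using mar[of P] X_def by simp
  have Y: "Y = FF P' j a b - FF P' i a b" using mar[of P'] Y_def by simp
  have s1': "0 \<le> X \<longleftrightarrow> 0 \<le> Y" using s1 X_def Y_def by simp
  have s2': "X \<le> 0 \<longleftrightarrow> Y \<le> 0"
    using s2 margin_anti[of n P m l] margin_anti[of n P' m l] X_def Y_def by simp
  have ab: "a \<noteq> b" using False by auto
  have "X = Y"
    using v[OF assms(3,6,8,9) ab] v[OF assms(3,7,8,9) ab] v[OF assms(4,6,8,9) ab] v[OF assms(4,7,8,9) ab]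
    apply (elim disjE)
    using s1' s2' X Y by simp_all
  then show ?thesis using X Y by simp
qed


lemma comb3a:
  fixes g1 g2 g3 :: "nat \<Rightarrow> int"
  assumes t: "\<And>w. w \<in> {x,y,z} \<Longrightarrow> (g1 w = -1 \<and> g2 w = 1 \<and> g3 w = 1) \<or> (g1 w = 1 \<and> g2 w = -1 \<and> g3 w = 1)
                 \<or> (g1 w = 1 \<and> g2 w = 1 \<and> g3 w = -1)"
  shows "g1 x + g2 y + g3 z = 1 \<or> g1 x + g2 z + g3 y = 1 \<or> g1 y + g2 x + g3 z = 1 \<or>
         g1 y + g2 z + g3 x = 1 \<or> g1 z + g2 x + g3 y = 1 \<or> g1 z + g2 y + g3 x = 1"
  using t[of x] t[of y] t[of z]
  apply simp
  apply (elim disjE conjE)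
  by simp_all

lemma comb3:
  fixes g1 g2 g3 :: "nat \<Rightarrow> int"
  assumes "x \<noteq> y" "y \<noteq> z" "x \<noteq> z"
    and t: "\<And>w. w \<in> {x,y,z} \<Longrightarrow> (g1 w = -1 \<and> g2 w = 1 \<and> g3 w = 1) \<or> (g1 w = 1 \<and> g2 w = -1 \<and> g3 w = 1)
                 \<or> (g1 w = 1 \<and> g2 w = 1 \<and> g3 w = -1)"
  shows "\<exists>i\<in>{x,y,z}. \<exists>j\<in>{x,y,z}. \<exists>k\<in>{x,y,z}. i \<noteq> j \<and> j \<noteq> k \<and> i \<noteq> k \<and> g1 i + g2 j + g3 k = 1"
  using comb3a[of x y z g1 g2 g3] t
  apply -
  apply (drule meta_mp, assumption)
  apply (elim disjE)
  apply (rule bexI[of _ x], rule bexI[of _ y], rule bexI[of _ z]; use assms(1-3) in simp)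
  apply (rule bexI[of _ x], rule bexI[of _ z], rule bexI[of _ y]; use assms(1-3) in simp)
  apply (rule bexI[of _ y], rule bexI[of _ x], rule bexI[of _ z]; use assms(1-3) in simp)
  apply (rule bexI[of _ y], rule bexI[of _ z], rule bexI[of _ x]; use assms(1-3) in simp)
  apply (rule bexI[of _ z], rule bexI[of _ x], rule bexI[of _ y]; use assms(1-3) in simp)
  apply (rule bexI[of _ z], rule bexI[of _ y], rule bexI[of _ x]; use assms(1-3) in simp)
  done

lemma tri_margin:
  assumes "m \<in> assignments n H" "i \<in> agents n" "j \<in> agents n" "k \<in> agents n"
    "i \<noteq> j" "j \<noteq> k" "i \<noteq> k" "m i = a" "m j = b" "m k = c"
  shows "\<exists>l\<in>assignments n H. \<forall>Q. margin n Q l m = FF Q i b a + FF Q j c b + FF Q k a c"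
proof -
  define l1 where "l1 = m(i := m j, j := m i)"
  have l1: "l1 \<in> assignments n H" unfolding l1_def using swap_assign[OF assms(1-3)] .
  define l where "l = l1(j := l1 k, k := l1 j)"
  have l: "l \<in> assignments n H" unfolding l_def using swap_assign[OF l1 assms(3,4)] .
  have li: "l i = b" "l j = c" "l k = a" using assms by (auto simp: l_def l1_def)
  have "margin n Q l m = FF Q i b a + FF Q j c b + FF Q k a c" for Q
  proof -
    have "margin n Q l m = (\<Sum>x\<in>{i,j,k}. FF Q x (l x) (m x))"
      by (rule margin_support) (use assms in \<open>auto simp: l_def l1_def\<close>)
    also have "\<dots> = FF Q i b a + FF Q j c b + FF Q k a c" using assms li by simp
    finally show ?thesis .
  qed
  thus ?thesis using l by blast
qed

lemma tri_contra:
  assumes H: "finite H" "card H = n" and pr: "is_profile n H P" "is_profile n H P'"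
    and g: "maj_graph n H P = maj_graph n H P'"
    and abc: "a \<in> H" "b \<in> H" "c \<in> H" "a \<noteq> b" "b \<noteq> c" "a \<noteq> c" and n3: "3 \<le> n"
    and s: "\<And>i. i \<in> agents n \<Longrightarrow> FF P i b a + FF P i c b + FF P i a c = 1"
    and s': "\<And>i. i \<in> agents n \<Longrightarrow> FF P' i b a + FF P' i c b + FF P' i a c = -1"
    and d: "\<And>i j u v. i \<in> agents n \<Longrightarrow> j \<in> agents n \<Longrightarrow> u \<in> H \<Longrightarrow> v \<in> H \<Longrightarrow>
              FF P i u v - FF P' i u v = FF P j u v - FF P' j u v"
  shows False
proof -
  have ag: "{1,2,3} \<subseteq> agents n" using n3 by (auto simp: agents_def)
  have v: "FF Q x u v = 1 \<or> FF Q x u v = -1"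
    if "is_profile n H Q" "x \<in> agents n" "u \<in> H" "v \<in> H" "u \<noteq> v" for Q x u v
    using FF_vals[OF that] by auto
  have t: "(FF P w b a = -1 \<and> FF P w c b = 1 \<and> FF P w a c = 1) \<or> (FF P w b a = 1 \<and> FF P w c b = -1 \<and> FF P w a c = 1)
                 \<or> (FF P w b a = 1 \<and> FF P w c b = 1 \<and> FF P w a c = -1)" if "w \<in> {1,2,3}" for w
  proof -
    have w: "w \<in> agents n" using that ag by auto
    show ?thesis using s[OF w] v[OF pr(1) w abc(2,1)] v[OF pr(1) w abc(3,2)] v[OF pr(1) w abc(1,3)] abc(4-6)
      by auto
  qed
  obtain i j k where ijk: "i \<in> {1,2,3}" "j \<in> {1,2,3}" "k \<in> {1,2,3}" "i \<noteq> j" "j \<noteq> k" "i \<noteq> k"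
    and e: "FF P i b a + FF P j c b + FF P k a c = 1"
  proof -
    have "\<exists>i\<in>{1,2,3}. \<exists>j\<in>{1,2,3}. \<exists>k\<in>{1,2,3}. i \<noteq> j \<and> j \<noteq> k \<and> i \<noteq> k \<and>
        FF P i b a + FF P j c b + FF P k a c = 1"
      by (rule comb3[of "1::nat" 2 3 "\<lambda>w. FF P w b a" "\<lambda>w. FF P w c b" "\<lambda>w. FF P w a c"]) (simp_all add: t)
    then show ?thesis using that by blast
  qed
  have ijk': "i \<in> agents n" "j \<in> agents n" "k \<in> agents n" using ijk ag by auto
  have "\<exists>m\<in>assignments n H. \<forall>t<length [i,j,k]. m ([i,j,k]!t) = [a,b,c]!t"
    by (rule assign_list[OF H]) (use ijk ijk' abc in auto)
  then obtain m where m: "m \<in> assignments n H" and mt: "\<forall>t<length [i,j,k]. m ([i,j,k]!t) = [a,b,c]!t"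
    by blast
  have mi: "m i = a" using mt[rule_format, of 0] by simp
  have mj: "m j = b" using mt[rule_format, of 1] by simp
  have mk: "m k = c" using mt[rule_format, of 2] by simp
  obtain l where l: "l \<in> assignments n H" and mar: "\<And>Q. margin n Q l m = FF Q i b a + FF Q j c b + FF Q k a c"
    using tri_margin[OF m ijk'(1-3) ijk(4-6) mi mj mk] by blast
  have "FF P' j c b = FF P j c b - (FF P i c b - FF P' i c b)" using d[OF ijk'(1,2) abc(3,2)] by simp
  moreover have "FF P' k a c = FF P k a c - (FF P i a c - FF P' i a c)" using d[OF ijk'(1,3) abc(1,3)] by simp
  ultimately have "margin n P' l m = -1" using mar[of P'] e s[OF ijk'(1)] s'[OF ijk'(1)] by simp
  moreover have "margin n P l m = 1" using mar[of P] e by simp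
  ultimately show False using graph_sign[OF g l m] by simp
qed

lemma delta_tri:
  assumes H: "finite H" "card H = n" and pr: "is_profile n H P" "is_profile n H P'"
    and g: "maj_graph n H P = maj_graph n H P'"
    and abc: "a \<in> H" "b \<in> H" "c \<in> H" "a \<noteq> b" "b \<noteq> c" "a \<noteq> c"
  shows "(FF P 1 b a - FF P' 1 b a) + (FF P 1 c b - FF P' 1 c b) + (FF P 1 a c - FF P' 1 a c) = 0"
proof -
  have "card {a,b,c} \<le> card H" using abc H by (intro card_mono) auto
  hence n3: "3 \<le> n" using abc H by simp
  have one: "1 \<in> agents n" using n3 by (simp add: agents_def)
  have d: "FF Q i u v - FF Q' i u v = FF Q j u v - FF Q' j u v"
    if "Q = P \<and> Q' = P' \<or> Q = P' \<and> Q' = P" "i \<in> agents n" "j \<in> agents n" "u \<in> H" "v \<in> H" for Q Q' i j u v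
    using that agent_diff[OF H pr g that(2,3,4,5)] by auto
  have tr: "FF Q x b a + FF Q x c b + FF Q x a c = 1 \<or> FF Q x b a + FF Q x c b + FF Q x a c = -1"
    if "is_profile n H Q" "x \<in> agents n" for Q x
    using FF_tri[OF that abc] .
  have same: "(FF P i b a + FF P i c b + FF P i a c) - (FF P' i b a + FF P' i c b + FF P' i a c)
      = (FF P 1 b a - FF P' 1 b a) + (FF P 1 c b - FF P' 1 c b) + (FF P 1 a c - FF P' 1 a c)"
    if "i \<in> agents n" for i
    using d[of P P' i 1 b a] d[of P P' i 1 c b] d[of P P' i 1 a c] that one abc by simp
  define T where "T = (FF P 1 b a - FF P' 1 b a) + (FF P 1 c b - FF P' 1 c b) + (FF P 1 a c - FF P' 1 a c)"
  have cs: "T = 2 \<or> T = -2 \<or> T = 0"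
    using tr[OF pr(1) one] tr[OF pr(2) one] apply (elim disjE)
    using same[OF one] unfolding T_def by linarith+
  moreover have "T \<noteq> 2"
  proof
    assume T: "T = 2"
    show False
    proof (rule tri_contra[OF H pr g abc n3])
      fix i assume i: "i \<in> agents n"
      show "FF P i b a + FF P i c b + FF P i a c = 1" using same[OF i] T tr[OF pr(1) i] tr[OF pr(2) i]
        unfolding T_def by auto
      show "FF P' i b a + FF P' i c b + FF P' i a c = -1" using same[OF i] T tr[OF pr(1) i] tr[OF pr(2) i]
        unfolding T_def by auto
    next
      fix i j u v assume "i \<in> agents n" "j \<in> agents n" "u \<in> H" "v \<in> H"
      then show "FF P i u v - FF P' i u v = FF P j u v - FF P' j u v" using d[of P P' i j u v] by simp
    qed
  qed
  moreover have "T \<noteq> -2"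
  proof
    assume T: "T = -2"
    show False
    proof (rule tri_contra[OF H pr(2,1) g[symmetric] abc n3])
      fix i assume i: "i \<in> agents n"
      show "FF P' i b a + FF P' i c b + FF P' i a c = 1" using same[OF i] T tr[OF pr(1) i] tr[OF pr(2) i]
        unfolding T_def by auto
      show "FF P i b a + FF P i c b + FF P i a c = -1" using same[OF i] T tr[OF pr(1) i] tr[OF pr(2) i]
        unfolding T_def by auto
    next
      fix i j u v assume "i \<in> agents n" "j \<in> agents n" "u \<in> H" "v \<in> H"
      then show "FF P' i u v - FF P i u v = FF P' j u v - FF P j u v" using d[of P' P i j u v] by simp
    qed
  qed
  ultimately have "T = 0" by blast
  then show ?thesis unfolding T_def .
qed


lemma margin_eq:
  assumes H: "finite H" "card H = n" and pr: "is_profile n H P" "is_profile n H P'"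
    and g: "maj_graph n H P = maj_graph n H P'"
    and l: "l \<in> assignments n H" and m: "m \<in> assignments n H"
  shows "margin n P l m = margin n P' l m"
proof (cases "n = 0")
  case True
  then show ?thesis by (simp add: margin_sum agents_def)
next
  case False
  have one: "1 \<in> agents n" using False by (simp add: agents_def)
  have "H \<noteq> {}" using False H by auto
  then obtain h0 where h0: "h0 \<in> H" by blast
  define \<delta> where "\<delta> u v = FF P 1 u v - FF P' 1 u v" for u v
  define \<phi> where "\<phi> u = \<delta> u h0" for u
  have anti: "\<delta> u v = - \<delta> v u" for u v unfolding \<delta>_def using FF_anti[of P 1 u v] FF_anti[of P' 1 u v] by simp
  have grad: "\<delta> u v = \<phi> u - \<phi> v" if "u \<in> H" "v \<in> H" for u v
  proof (cases "u = v \<or> u = h0 \<or> v = h0")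
    case True
    then show ?thesis unfolding \<phi>_def using anti[of u v] anti[of h0 h0] by (auto simp: \<delta>_def)
  next
    case False
    have "\<delta> u v + \<delta> h0 u + \<delta> v h0 = 0"
      using delta_tri[OF H pr g that(2,1) h0] False unfolding \<delta>_def by auto
    then show ?thesis unfolding \<phi>_def using anti[of h0 u] by simp
  qed
  have ag: "FF P i u v - FF P' i u v = \<delta> u v" if "i \<in> agents n" "u \<in> H" "v \<in> H" for i u v
    using agent_diff[OF H pr g that(1) one that(2,3)] unfolding \<delta>_def by simp
  have bl: "bij_betw l (agents n) H" and bm: "bij_betw m (agents n) H"
    using l m unfolding assignments_def by auto
  have lH: "l x \<in> H" and mH: "m x \<in> H" if "x \<in> agents n" for x
    using bl bm that by (auto simp: bij_betw_def)
  have "margin n P l m - margin n P' l m = (\<Sum>x\<in>agents n. FF P x (l x) (m x) - FF P' x (l x) (m x))"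
    by (simp add: margin_sum sum_subtractf)
  also have "\<dots> = (\<Sum>x\<in>agents n. \<phi> (l x) - \<phi> (m x))"
    by (rule sum.cong) (auto simp: ag lH mH grad)
  also have "\<dots> = (\<Sum>x\<in>agents n. \<phi> (l x)) - (\<Sum>x\<in>agents n. \<phi> (m x))"
    by (simp add: sum_subtractf)
  also have "\<dots> = 0"
    using sum.reindex_bij_betw[OF bl, of \<phi>] sum.reindex_bij_betw[OF bm, of \<phi>] by simp
  finally show ?thesis by simp
qed

lemma pd_char:
  assumes pr: "is_profile n H P" and l: "l \<in> assignments n H" and m: "m \<in> assignments n H"
  shows "pareto_dominates n P l m \<longleftrightarrow> l \<noteq> m \<and> margin n P l m = int (card {x\<in>agents n. l x \<noteq> m x})"
proof -
  define D where "D = {x\<in>agents n. l x \<noteq> m x}"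
  have fD: "finite D" unfolding D_def agents_def by auto
  have bl: "bij_betw l (agents n) H" and bm: "bij_betw m (agents n) H"
    and el: "l \<in> extensional (agents n)" and em: "m \<in> extensional (agents n)"
    using l m unfolding assignments_def by auto
  have lH: "l x \<in> H" and mH: "m x \<in> H" if "x \<in> agents n" for x
    using bl bm that by (auto simp: bij_betw_def)
  have irr: "(u, u) \<notin> P x" if "x \<in> agents n" for x u
    using pr that unfolding is_profile_def strict_linear_order_on_def irrefl_def by auto
  have mar: "margin n P l m = (\<Sum>x\<in>D. FF P x (l x) (m x))"
    by (rule margin_support) (auto simp: D_def)
  have fv: "(FF P x (l x) (m x) = 1 \<and> (l x, m x) \<in> P x) \<or> (FF P x (l x) (m x) = -1 \<and> (l x, m x) \<notin> P x)"
    if "x \<in> D" for x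
    using FF_vals[OF pr _ lH mH, of x] that unfolding D_def by auto
  have neq: "l \<noteq> m \<longleftrightarrow> D \<noteq> {}"
  proof
    assume "l \<noteq> m"
    then show "D \<noteq> {}" using extensionalityI[OF el em] unfolding D_def by blast
  qed (auto simp: D_def)
  have "margin n P l m = int (card D) \<longleftrightarrow> (\<Sum>x\<in>D. 1 - FF P x (l x) (m x)) = 0"
    by (auto simp add: mar sum_subtractf)
  also have "\<dots> \<longleftrightarrow> (\<forall>x\<in>D. FF P x (l x) (m x) = 1)"
    by (subst sum_nonneg_eq_0_iff[OF fD]) (use fv in force)+
  also have "\<dots> \<longleftrightarrow> (\<forall>x\<in>D. (l x, m x) \<in> P x)"
    using fv by auto
  finally have c: "margin n P l m = int (card D) \<longleftrightarrow> (\<forall>x\<in>D. (l x, m x) \<in> P x)" .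
  show ?thesis
    unfolding c[unfolded D_def] neq[unfolded D_def] pareto_dominates_def weak_pref_def strict_pref_def
    using irr by (auto simp: D_def)
qed


theorem corollary4p1:
  fixes n :: nat and H :: "'h set"
  assumes "finite H" and "card H = n"
  shows "majoritarian n H (PO n H)
       \<and> majoritarian n H (least_unpopularity n H)
       \<and> majoritarian n H (mixed_popularity n H)"
proof -
  have me: "margin n P l m = margin n P' l m"
    if "is_profile n H P" "is_profile n H P'" "maj_graph n H P = maj_graph n H P'"
       "l \<in> assignments n H" "m \<in> assignments n H" for P P' l m
    using margin_eq[OF assms that] .
  have um: "unpopularity_margin n H P m = unpopularity_margin n H P' m"
    if "is_profile n H P" "is_profile n H P'" "maj_graph n H P = maj_graph n H P'"
       "m \<in> assignments n H" for P P' m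
    unfolding unpopularity_margin_def
    by (rule arg_cong[where f = Max], rule image_cong) (use me[OF that(1-3) _ that(4)] in auto)
  have mp: "mixed_popular n H P \<pi> = mixed_popular n H P' \<pi>"
    if "is_profile n H P" "is_profile n H P'" "maj_graph n H P = maj_graph n H P'" for P P' \<pi>
  proof -
    have "(\<Sum>\<mu>\<in>assignments n H. \<pi> \<mu> * of_int (margin n P \<mu> l)) =
          (\<Sum>\<mu>\<in>assignments n H. \<pi> \<mu> * of_int (margin n P' \<mu> l))" if "l \<in> assignments n H" for l
      by (rule sum.cong) (use me[OF \<open>is_profile n H P\<close> \<open>is_profile n H P'\<close> \<open>maj_graph n H P = maj_graph n H P'\<close> _ that] in auto)
    then show ?thesis unfolding mixed_popular_def by auto
  qed
  have pd: "pareto_dominates n P l m = pareto_dominates n P' l m"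
    if "is_profile n H P" "is_profile n H P'" "maj_graph n H P = maj_graph n H P'"
       "l \<in> assignments n H" "m \<in> assignments n H" for P P' l m
    using pd_char[OF that(1,4,5)] pd_char[OF that(2,4,5)] me[OF that] by simp
  show ?thesis
    unfolding majoritarian_def
  proof (intro conjI allI impI)
    fix P P' assume a: "is_profile n H P" "is_profile n H P'" "maj_graph n H P = maj_graph n H P'"
    show "PO n H P = PO n H P'" unfolding PO_def using pd[OF a] by auto
    show "least_unpopularity n H P = least_unpopularity n H P'"
      unfolding least_unpopularity_def using um[OF a] by auto
    show "mixed_popularity n H P = mixed_popularity n H P'"
      unfolding mixed_popularity_def using mp[OF a] by auto
  qed
qed

end
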